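(* Let $(\mathcal{S},d_{\mathcal{S}})$, $(\mathcal{A},d_{\mathcal{A}})$ be metric spaces, $\gamma\in[0,1)$, $r$ a reward function, $\pi,\pi'$ policies with $\pi'$ being $L_{\pi'}$-LC, and $p,p'$ configurations. Then $$\big\|A_{\pi,p}^{\pi',p'}\big\|_L\le\big\|A_{\pi,p}^{\pi',p}\big\|_L+(L_{\pi'}+1)\big\|A_{\pi,p}^{\pi,p'}\big\|_L.$$
   Context: $r:\mathcal{S}\times\mathcal{A}\times\mathcal{S}\to\mathbb{R}$. A configuration is a Markov kernel $p(\cdot|s,a)$ on $\mathcal{S}$; a policy is a Markov kernel $\pi(\cdot|s)$ on $\mathcal{A}$. Value functions (assumed well defined): $V_{\pi,p}(s)=\int\pi(da|s)\int p(ds'|s,a)(r(s,a,s')+\gamma V_{\pi,p}(s'))$, $Q_{\pi,p}(s,a)=\int p(ds'|s,a)(r(s,a,s')+\gamma V_{\pi,p}(s'))$, $U_{\pi,p}(s,a,s')=r(s,a,s')+\gamma V_{\pi,p}(s')$. Relative advantages: $A_{\pi,p}^{\pi',p}(s)=\int\pi'(da|s)(Q_{\pi,p}(s,a)-V_{\pi,p}(s))$; $A_{\pi,p}^{\pi,p'}(s,a)=\int p'(ds'|s,a)(U_{\pi,p}(s,a,s')-Q_{\pi,p}(s,a))$, a function on $\mathcal{S}\times\mathcal{A}$; $A_{\pi,p}^{\pi',p'}(s)=\int\pi'(da|s)\int p'(ds'|s,a)(U_{\pi,p}(s,a,s')-V_{\pi,p}(s))$. $\|\cdot\|_L$ is the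 Lipschitz semi-norm, with $\mathcal{S}\times\mathcal{A}$ carrying the metric $d_{\mathcal{S}}(s,\bar s)+d_{\mathcal{A}}(a,\bar a)$. $\mathcal{W}(\mu,\nu)=\sup_{\|f\|_L\le1}|\int f\,d(\mu-\nu)|$, and $\pi'$ is $L_{\pi'}$-LC if $\mathcal{W}(\pi'(\cdot|s),\pi'(\cdot|\bar s))\le L_{\pi'}d_{\mathcal{S}}(s,\bar s)$ for all $s,\bar s$. *)

theory Defs
  imports "HOL-Probability.Probability"
begin

definition lip_norm :: "('x::metric_space \<Rightarrow> real) \<Rightarrow> ennreal" where
  "lip_norm f = (SUP xy \<in> {(x, y). x \<noteq> y}. ennreal (\<bar>f (fst xy) - f (snd xy)\<bar> / dist (fst xy) (snd xy)))"

definition lip_norm_SA :: "('s::metric_space \<Rightarrow> 'a::metric_space \<Rightarrow> real) \<Rightarrow> ennreal" where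
  "lip_norm_SA g = (SUP z \<in> {((s, a), (t, b)). (s, a) \<noteq> (t, b)}.
      ennreal (\<bar>g (fst (fst z)) (snd (fst z)) - g (fst (snd z)) (snd (snd z))\<bar>
               / (dist (fst (fst z)) (fst (snd z)) + dist (snd (fst z)) (snd (snd z)))))"

text \<open>Wasserstein-1 distance (Kantorovich dual form).\<close>
definition wasserstein :: "'x::metric_space measure \<Rightarrow> 'x measure \<Rightarrow> ennreal" where
  "wasserstein \<mu> \<nu> = (SUP f \<in> {f. lip_norm f \<le> 1}. ennreal \<bar>(\<integral>x. f x \<partial>\<mu>) - (\<integral>x. f x \<partial>\<nu>)\<bar>)"

definition policy :: "('s \<Rightarrow> 'a::topological_space measure) \<Rightarrow> bool" where
  "policy \<pi> \<longleftrightarrow> (\<forall>s. prob_space (\<pi> s) \<and> sets (\<pi> s) = sets borel)"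

definition configuration :: "('s::topological_space \<Rightarrow> 'a \<Rightarrow> 's measure) \<Rightarrow> bool" where
  "configuration p \<longleftrightarrow> (\<forall>s a. prob_space (p s a) \<and> sets (p s a) = sets borel)"

definition lipschitz_policy :: "real \<Rightarrow> ('s::metric_space \<Rightarrow> 'a::metric_space measure) \<Rightarrow> bool" where
  "lipschitz_policy L \<pi> \<longleftrightarrow> (\<forall>s t. wasserstein (\<pi> s) (\<pi> t) \<le> ennreal (L * dist s t))"

definition value_fn ::
  "('s \<Rightarrow> 'a \<Rightarrow> 's \<Rightarrow> real) \<Rightarrow> real \<Rightarrow> ('s \<Rightarrow> 'a measure) \<Rightarrow> ('s \<Rightarrow> 'a \<Rightarrow> 's measure)
   \<Rightarrow> ('s \<Rightarrow> real) \<Rightarrow> bool" where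
  "value_fn r \<gamma> \<pi> p V \<longleftrightarrow>
     (\<forall>s a. integrable (p s a) (\<lambda>s'. r s a s' + \<gamma> * V s')) \<and>
     (\<forall>s. integrable (\<pi> s) (\<lambda>a. \<integral>s'. r s a s' + \<gamma> * V s' \<partial>p s a)) \<and>
     (\<forall>s. V s = (\<integral>a. (\<integral>s'. r s a s' + \<gamma> * V s' \<partial>p s a) \<partial>\<pi> s))"

definition Ufn :: "('s \<Rightarrow> 'a \<Rightarrow> 's \<Rightarrow> real) \<Rightarrow> real \<Rightarrow> ('s \<Rightarrow> real) \<Rightarrow> 's \<Rightarrow> 'a \<Rightarrow> 's \<Rightarrow> real" where
  "Ufn r \<gamma> V s a s' = r s a s' + \<gamma> * V s'"

definition Qfn :: "('s \<Rightarrow> 'a \<Rightarrow> 's \<Rightarrow> real) \<Rightarrow> real \<Rightarrow> ('s \<Rightarrow> 'a \<Rightarrow> 's measure) \<Rightarrow> ('s \<Rightarrow> real)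
   \<Rightarrow> 's \<Rightarrow> 'a \<Rightarrow> real" where
  "Qfn r \<gamma> p V s a = (\<integral>s'. Ufn r \<gamma> V s a s' \<partial>p s a)"

text \<open>Relative advantages, where V = V_{\<pi>,p}, Q = Q_{\<pi>,p}, U = U_{\<pi>,p}.\<close>
definition adv_policy :: "('s \<Rightarrow> 'a \<Rightarrow> 's \<Rightarrow> real) \<Rightarrow> real \<Rightarrow> ('s \<Rightarrow> 'a \<Rightarrow> 's measure) \<Rightarrow> ('s \<Rightarrow> real)
   \<Rightarrow> ('s \<Rightarrow> 'a measure) \<Rightarrow> 's \<Rightarrow> real" where
  "adv_policy r \<gamma> p V \<pi>' s = (\<integral>a. Qfn r \<gamma> p V s a - V s \<partial>\<pi>' s)"

definition adv_config :: "('s \<Rightarrow> 'a \<Rightarrow> 's \<Rightarrow> real) \<Rightarrow> real \<Rightarrow> ('s \<Rightarrow> 'a \<Rightarrow> 's measure) \<Rightarrow> ('s \<Rightarrow> real)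
   \<Rightarrow> ('s \<Rightarrow> 'a \<Rightarrow> 's measure) \<Rightarrow> 's \<Rightarrow> 'a \<Rightarrow> real" where
  "adv_config r \<gamma> p V p' s a = (\<integral>s'. Ufn r \<gamma> V s a s' - Qfn r \<gamma> p V s a \<partial>p' s a)"

definition adv_both :: "('s \<Rightarrow> 'a \<Rightarrow> 's \<Rightarrow> real) \<Rightarrow> real \<Rightarrow> ('s \<Rightarrow> real)
   \<Rightarrow> ('s \<Rightarrow> 'a measure) \<Rightarrow> ('s \<Rightarrow> 'a \<Rightarrow> 's measure) \<Rightarrow> 's \<Rightarrow> real" where
  "adv_both r \<gamma> V \<pi>' p' s = (\<integral>a. (\<integral>s'. Ufn r \<gamma> V s a s' - V s \<partial>p' s a) \<partial>\<pi>' s)"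

end

theory Submission
  imports Defs
begin

lemma prob_integral_const:
  assumes "prob_space M" shows "(\<integral>x. (c::real) \<partial>M) = c"
  using assms by (simp add: prob_space.prob_space)

lemma prob_space_imp_finite_measure: "prob_space M \<Longrightarrow> finite_measure M"
  by (simp add: prob_space_def)

theorem lemma5:
  fixes r :: "'s::metric_space \<Rightarrow> 'a::metric_space \<Rightarrow> 's \<Rightarrow> real"
    and \<gamma> :: real and L :: real
    and \<pi> \<pi>' :: "'s \<Rightarrow> 'a measure"
    and p p' :: "'s \<Rightarrow> 'a \<Rightarrow> 's measure"
    and V :: "'s \<Rightarrow> real"
  assumes "0 \<le> \<gamma>" and "\<gamma> < 1"
    and "policy \<pi>" and "policy \<pi>'"
    and "configuration p" and "configuration p'"
    and "0 \<le> L" and "lipschitz_policy L \<pi>'"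
    and "value_fn r \<gamma> \<pi> p V"
    and "\<forall>s. integrable (\<pi>' s) (\<lambda>a. Qfn r \<gamma> p V s a - V s)"
    and "\<forall>s a. integrable (p' s a) (\<lambda>s'. Ufn r \<gamma> V s a s' - Qfn r \<gamma> p V s a)"
    and "\<forall>s a. integrable (p' s a) (\<lambda>s'. Ufn r \<gamma> V s a s' - V s)"
    and "\<forall>s. integrable (\<pi>' s) (\<lambda>a. \<integral>s'. Ufn r \<gamma> V s a s' - V s \<partial>p' s a)"
  shows "lip_norm (adv_both r \<gamma> V \<pi>' p')
           \<le> lip_norm (adv_policy r \<gamma> p V \<pi>') + ennreal (L + 1) * lip_norm_SA (adv_config r \<gamma> p V p')"
proof -
  define g where "g = adv_config r \<gamma> p V p'"
  define P where "P = adv_policy r \<gamma> p V \<pi>'"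
  define B where "B = adv_both r \<gamma> V \<pi>' p'"
  define h where "h = (\<lambda>s a. \<integral>s'. Ufn r \<gamma> V s a s' - V s \<partial>p' s a)"
  define q where "q = (\<lambda>s a. Qfn r \<gamma> p V s a - V s)"
  have pp': "prob_space (p' s a)" for s a using assms(6) unfolding configuration_def by auto
  have ppi: "prob_space (\<pi>' s)" for s using assms(4) unfolding policy_def by auto
  have spi: "sets (\<pi>' s) = sets borel" for s using assms(4) unfolding policy_def by auto
  have hg: "h s a = g s a + q s a" for s a
  proof -
    have "h s a = (\<integral>s'. (Ufn r \<gamma> V s a s' - Qfn r \<gamma> p V s a) + q s a \<partial>p' s a)"
      unfolding h_def q_def by (rule Bochner_Integration.integral_cong) auto
    also have "\<dots> = g s a + q s a"
      unfolding g_def adv_config_def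
      by (subst Bochner_Integration.integral_add)
         (use assms(11) pp' prob_integral_const in \<open>auto simp: finite_measure.integrable_const prob_space_imp_finite_measure prob_space.prob_space\<close>)
    finally show ?thesis .
  qed
  have gint: "integrable (\<pi>' s) (g s)" for s
  proof -
    have "g s = (\<lambda>a. h s a - q s a)" using hg by auto
    moreover have "integrable (\<pi>' s) (\<lambda>a. h s a - q s a)"
      using assms(10,13) unfolding h_def q_def by auto
    ultimately show ?thesis by simp
  qed
  have Bdec: "B s = P s + (\<integral>a. g s a \<partial>\<pi>' s)" for s
  proof -
    have "B s = (\<integral>a. g s a + q s a \<partial>\<pi>' s)"
      unfolding B_def adv_both_def using hg unfolding h_def by simp
    also have "\<dots> = (\<integral>a. g s a \<partial>\<pi>' s) + (\<integral>a. q s a \<partial>\<pi>' s)"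
      using gint assms(10) unfolding q_def by (intro Bochner_Integration.integral_add) auto
    finally show ?thesis unfolding P_def adv_policy_def q_def by simp
  qed
  show ?thesis
  proof (cases "lip_norm_SA g = top")
    case True
    have "ennreal (L + 1) * lip_norm_SA g = top" using True assms(7)
      by (simp add: ennreal_mult_top)
    then show ?thesis unfolding g_def by simp
  next
    case False
    then obtain k where K: "lip_norm_SA g = ennreal k" and k0: "0 \<le> k"
      by (cases "lip_norm_SA g") auto
    have ga: "\<bar>g s a - g t a\<bar> \<le> k * dist s t" for s t a
    proof (cases "s = t")
      case False
      have "ennreal (\<bar>g s a - g t a\<bar> / (dist s t + dist a a)) \<le> lip_norm_SA g"
        unfolding lip_norm_SA_def
        by (rule SUP_upper2[where i="((s,a),(t,a))"]) (use False in auto)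
      then have "\<bar>g s a - g t a\<bar> / dist s t \<le> k" using K k0 by simp
      then show ?thesis using False by (simp add: divide_le_eq mult.commute)
    qed simp
    have gb: "\<bar>g t a - g t b\<bar> \<le> k * dist a b" for t a b
    proof (cases "a = b")
      case False
      have "ennreal (\<bar>g t a - g t b\<bar> / (dist t t + dist a b)) \<le> lip_norm_SA g"
        unfolding lip_norm_SA_def
        by (rule SUP_upper2[where i="((t,a),(t,b))"]) (use False in auto)
      then have "\<bar>g t a - g t b\<bar> / dist a b \<le> k" using K k0 by simp
      then show ?thesis using False by (simp add: divide_le_eq mult.commute)
    qed simp
    have W: "\<bar>(\<integral>a. g t a \<partial>\<pi>' s) - (\<integral>a. g t a \<partial>\<pi>' t)\<bar> \<le> k * (L * dist s t)" for s t
    proof (cases "k = 0")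
      case True
      then have "g t = (\<lambda>a. g t undefined)" using gb by fastforce
      then show ?thesis using prob_integral_const[OF ppi] k0 assms(7)
        by (metis abs_zero cancel_comm_monoid_add_class.diff_cancel mult_nonneg_nonneg zero_le_dist)
    next
      case False
      then have kp: "0 < k" using k0 by simp
      define f where "f = (\<lambda>a. g t a / k)"
      have "lip_norm f \<le> 1"
        unfolding lip_norm_def
      proof (rule SUP_least)
        fix xy :: "'a \<times> 'a" assume "xy \<in> {(x, y). x \<noteq> y}"
        then have ne: "fst xy \<noteq> snd xy" by auto
        have "\<bar>f (fst xy) - f (snd xy)\<bar> = \<bar>g t (fst xy) - g t (snd xy)\<bar> / k"
          unfolding f_def using kp by (simp add: diff_divide_distrib[symmetric])
        also have "\<dots> \<le> dist (fst xy) (snd xy)" using gb kp by (simp add: divide_le_eq mult.commute)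
        finally show "ennreal (\<bar>f (fst xy) - f (snd xy)\<bar> / dist (fst xy) (snd xy)) \<le> 1"
          using ne by (simp add: divide_le_eq)
      qed
      then have "ennreal \<bar>(\<integral>x. f x \<partial>\<pi>' s) - (\<integral>x. f x \<partial>\<pi>' t)\<bar> \<le> wasserstein (\<pi>' s) (\<pi>' t)"
        unfolding wasserstein_def by (intro SUP_upper) auto
      also have "\<dots> \<le> ennreal (L * dist s t)" using assms(8) unfolding lipschitz_policy_def by auto
      finally have "\<bar>(\<integral>x. f x \<partial>\<pi>' s) - (\<integral>x. f x \<partial>\<pi>' t)\<bar> \<le> L * dist s t"
        using assms(7) by (simp add: ennreal_le_iff)
      moreover have "\<bar>(\<integral>x. f x \<partial>\<pi>' s) - (\<integral>x. f x \<partial>\<pi>' t)\<bar>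
          = \<bar>(\<integral>a. g t a \<partial>\<pi>' s) - (\<integral>a. g t a \<partial>\<pi>' t)\<bar> / k"
        unfolding f_def using kp by (simp add: diff_divide_distrib[symmetric])
      ultimately show ?thesis using kp by (simp add: divide_le_eq mult.commute)
    qed
    have E: "\<bar>(\<integral>a. g s a \<partial>\<pi>' s) - (\<integral>a. g t a \<partial>\<pi>' s)\<bar> \<le> k * dist s t" for s t
    proof -
      have mt: "g t \<in> borel_measurable (\<pi>' s)"
        using borel_measurable_integrable[OF gint[of t]] measurable_cong_sets[OF spi[of t] refl] spi[of s]
        by (metis measurable_cong_sets)
      have id: "integrable (\<pi>' s) (\<lambda>a. g s a - g t a)"
        using ga mt borel_measurable_integrable[OF gint[of s]]
        by (intro finite_measure.integrable_const_bound[where B="k * dist s t"])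
           (auto simp: ppi prob_space_imp_finite_measure)
      have it: "integrable (\<pi>' s) (g t)"
      proof -
        have "g t = (\<lambda>a. g s a - (g s a - g t a))" by auto
        then show ?thesis using gint[of s] id by (metis Bochner_Integration.integrable_diff)
      qed
      have "(\<integral>a. g s a \<partial>\<pi>' s) - (\<integral>a. g t a \<partial>\<pi>' s) = (\<integral>a. g s a - g t a \<partial>\<pi>' s)"
        using gint[of s] it by (simp add: Bochner_Integration.integral_diff)
      moreover have "(\<integral>a. g s a - g t a \<partial>\<pi>' s) \<le> k * dist s t"
        using prob_space.integral_le_const[OF ppi id] ga by (simp add: abs_le_iff)
      moreover have "- (k * dist s t) \<le> (\<integral>a. g s a - g t a \<partial>\<pi>' s)"
        proof (rule prob_space.integral_ge_const[OF ppi id])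
        show "AE x in \<pi>' s. - (k * dist s t) \<le> g s x - g t x"
        proof (rule AE_I2)
          fix x have "\<bar>g s x - g t x\<bar> \<le> k * dist s t" by (rule ga)
          then show "- (k * dist s t) \<le> g s x - g t x" by linarith
        qed
      qed
      ultimately show ?thesis by linarith
    qed
    have main: "\<bar>B s - B t\<bar> \<le> \<bar>P s - P t\<bar> + (L + 1) * k * dist s t" for s t
    proof -
      have "\<bar>B s - B t\<bar> \<le> \<bar>P s - P t\<bar> + \<bar>(\<integral>a. g s a \<partial>\<pi>' s) - (\<integral>a. g t a \<partial>\<pi>' s)\<bar>
           + \<bar>(\<integral>a. g t a \<partial>\<pi>' s) - (\<integral>a. g t a \<partial>\<pi>' t)\<bar>"
        unfolding Bdec by linarith
      also have "\<dots> \<le> \<bar>P s - P t\<bar> + k * dist s t + k * (L * dist s t)"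
        using E[of s t] W[of s t] by linarith
      finally show ?thesis by (simp add: algebra_simps)
    qed
    have "lip_norm B \<le> lip_norm P + ennreal (L + 1) * ennreal k"
      unfolding lip_norm_def[of B]
    proof (rule SUP_least)
      fix xy :: "'s \<times> 's" assume "xy \<in> {(x, y). x \<noteq> y}"
      then have ne: "fst xy \<noteq> snd xy" by auto
      then have d: "dist (fst xy) (snd xy) > 0" by simp
      have "\<bar>B (fst xy) - B (snd xy)\<bar> / dist (fst xy) (snd xy)
            \<le> \<bar>P (fst xy) - P (snd xy)\<bar> / dist (fst xy) (snd xy) + (L + 1) * k"
      proof -
        have "\<bar>B (fst xy) - B (snd xy)\<bar> \<le> \<bar>P (fst xy) - P (snd xy)\<bar> + ((L + 1) * k) * dist (fst xy) (snd xy)"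
          using main[of "fst xy" "snd xy"] by simp
        then have "\<bar>B (fst xy) - B (snd xy)\<bar> / dist (fst xy) (snd xy)
           \<le> (\<bar>P (fst xy) - P (snd xy)\<bar> + ((L + 1) * k) * dist (fst xy) (snd xy)) / dist (fst xy) (snd xy)"
          using d by (intro divide_right_mono) auto
        also have "\<dots> = \<bar>P (fst xy) - P (snd xy)\<bar> / dist (fst xy) (snd xy) + (L + 1) * k"
          using d by (simp add: add_divide_distrib)
        finally show ?thesis .
      qed
      then have "ennreal (\<bar>B (fst xy) - B (snd xy)\<bar> / dist (fst xy) (snd xy))
            \<le> ennreal (\<bar>P (fst xy) - P (snd xy)\<bar> / dist (fst xy) (snd xy) + (L + 1) * k)"
        by (rule ennreal_leI)
      also have "\<dots> = ennreal (\<bar>P (fst xy) - P (snd xy)\<bar> / dist (fst xy) (snd xy)) + ennreal ((L + 1) * k)"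
        using d k0 assms(7) by (intro ennreal_plus) auto
      also have "\<dots> \<le> lip_norm P + ennreal (L + 1) * ennreal k"
        unfolding lip_norm_def using ne assms(7) k0
        by (intro add_mono SUP_upper) (auto simp: ennreal_mult)
      finally show "ennreal (\<bar>B (fst xy) - B (snd xy)\<bar> / dist (fst xy) (snd xy))
            \<le> lip_norm P + ennreal (L + 1) * ennreal k" .
    qed
    then show ?thesis unfolding B_def P_def g_def[symmetric] K .
  qed
qed

end
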